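(* Let $(W,S)$ be a Coxeter system, $w\in W\setminus\{1\}$, and $k\in I$ with $k\notin D_R(w)$. Let $W_{I\setminus\{k\}}=\langle s_i : i\in I\setminus\{k\}\rangle$. Then $$\mathrm{Annex}(ws_k)\subseteq \mathrm{Annex}(w)\cdot W_{I\setminus\{k\}}=\{xy: x\in\mathrm{Annex}(w),\ y\in W_{I\setminus\{k\}}\}.$$
   Context: $(W,S)$ a Coxeter system with $S=\{s_i:i\in I\}$; $\ell$ the length; $\le$ the Bruhat order. The right descent set is $D_R(w)=\{i\in I:\ell(ws_i)<\ell(w)\}$. $\mathrm{Annex}(w)=\{y\in W: w\not\le y\}$. *)

theory Defs
  imports "HOL-Algebra.Algebra"
begin

text \<open>A Coxeter system is given by a group G together with a family s indexed by I
  (S = s ` I), presented by a Coxeter matrix m (m i j = 0 encodes infinity).\<close>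

definition coxeter_matrix :: "'i set \<Rightarrow> ('i \<Rightarrow> 'i \<Rightarrow> nat) \<Rightarrow> bool" where
  "coxeter_matrix I m \<longleftrightarrow>
     (\<forall>i\<in>I. m i i = 1) \<and>
     (\<forall>i\<in>I. \<forall>j\<in>I. i \<noteq> j \<longrightarrow> m i j = m j i \<and> (m i j = 0 \<or> m i j \<ge> 2))"

definition word_prod :: "('a, 'b) monoid_scheme \<Rightarrow> ('i \<Rightarrow> 'a) \<Rightarrow> 'i list \<Rightarrow> 'a" where
  "word_prod G s ws = foldr (\<lambda>i x. s i \<otimes>\<^bsub>G\<^esub> x) ws \<one>\<^bsub>G\<^esub>"

definition cox_relators :: "'i set \<Rightarrow> ('i \<Rightarrow> 'i \<Rightarrow> nat) \<Rightarrow> 'i list set" where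
  "cox_relators I m = {[i, i] | i. i \<in> I} \<union>
     {concat (replicate (m i j) [i, j]) | i j. i \<in> I \<and> j \<in> I \<and> i \<noteq> j \<and> m i j \<noteq> 0}"

definition cox_del :: "'i set \<Rightarrow> ('i \<Rightarrow> 'i \<Rightarrow> nat) \<Rightarrow> 'i list \<Rightarrow> 'i list \<Rightarrow> bool" where
  "cox_del I m xs ys \<longleftrightarrow> (\<exists>u r v. r \<in> cox_relators I m \<and> xs = u @ r @ v \<and> ys = u @ v)"

definition cox_equiv :: "'i set \<Rightarrow> ('i \<Rightarrow> 'i \<Rightarrow> nat) \<Rightarrow> 'i list \<Rightarrow> 'i list \<Rightarrow> bool" where
  "cox_equiv I m = (symclp (cox_del I m))\<^sup>*\<^sup>*"

text \<open>(G, s ` I) is a Coxeter system: G is generated by the s i and has the Coxeter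
  presentation with respect to some Coxeter matrix, i.e. a word in the generators
  is trivial in G iff it is trivial modulo the Coxeter relations.\<close>
definition coxeter_system :: "('a, 'b) monoid_scheme \<Rightarrow> 'i set \<Rightarrow> ('i \<Rightarrow> 'a) \<Rightarrow> bool" where
  "coxeter_system G I s \<longleftrightarrow>
     group G \<and> s ` I \<subseteq> carrier G \<and> generate G (s ` I) = carrier G \<and>
     (\<exists>m. coxeter_matrix I m \<and>
        (\<forall>ws \<in> lists I. word_prod G s ws = \<one>\<^bsub>G\<^esub> \<longleftrightarrow> cox_equiv I m ws []))"

definition cox_length :: "('a, 'b) monoid_scheme \<Rightarrow> 'i set \<Rightarrow> ('i \<Rightarrow> 'a) \<Rightarrow> 'a \<Rightarrow> nat" where
  "cox_length G I s w = (LEAST n. \<exists>ws \<in> lists I. length ws = n \<and> word_prod G s ws = w)"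

definition right_descent :: "('a, 'b) monoid_scheme \<Rightarrow> 'i set \<Rightarrow> ('i \<Rightarrow> 'a) \<Rightarrow> 'a \<Rightarrow> 'i set" where
  "right_descent G I s w =
     {i \<in> I. cox_length G I s (w \<otimes>\<^bsub>G\<^esub> s i) < cox_length G I s w}"

definition reflections :: "('a, 'b) monoid_scheme \<Rightarrow> 'i set \<Rightarrow> ('i \<Rightarrow> 'a) \<Rightarrow> 'a set" where
  "reflections G I s = {u \<otimes>\<^bsub>G\<^esub> s i \<otimes>\<^bsub>G\<^esub> inv\<^bsub>G\<^esub> u | u i. u \<in> carrier G \<and> i \<in> I}"

definition bruhat_step :: "('a, 'b) monoid_scheme \<Rightarrow> 'i set \<Rightarrow> ('i \<Rightarrow> 'a) \<Rightarrow> 'a \<Rightarrow> 'a \<Rightarrow> bool" where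
  "bruhat_step G I s x y \<longleftrightarrow>
     x \<in> carrier G \<and> (\<exists>t \<in> reflections G I s. y = x \<otimes>\<^bsub>G\<^esub> t) \<and>
     cox_length G I s x < cox_length G I s y"

definition bruhat_le :: "('a, 'b) monoid_scheme \<Rightarrow> 'i set \<Rightarrow> ('i \<Rightarrow> 'a) \<Rightarrow> 'a \<Rightarrow> 'a \<Rightarrow> bool" where
  "bruhat_le G I s u w \<longleftrightarrow> u \<in> carrier G \<and> w \<in> carrier G \<and> (bruhat_step G I s)\<^sup>*\<^sup>* u w"

definition annex :: "('a, 'b) monoid_scheme \<Rightarrow> 'i set \<Rightarrow> ('i \<Rightarrow> 'a) \<Rightarrow> 'a \<Rightarrow> 'a set" where
  "annex G I s w = {y \<in> carrier G. \<not> bruhat_le G I s w y}"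

end

theory Submission
  imports Defs
begin

fun pflip :: "('a, 'b) monoid_scheme \<Rightarrow> ('i \<Rightarrow> 'a) \<Rightarrow> 'i list \<Rightarrow> 'a \<Rightarrow> bool" where
  "pflip G s [] y = False"
| "pflip G s (i # c) y = ((y = s i) \<noteq> pflip G s c (s i \<otimes>\<^bsub>G\<^esub> y \<otimes>\<^bsub>G\<^esub> s i))"

fun alt :: "'i \<Rightarrow> 'i \<Rightarrow> nat \<Rightarrow> 'i list" where
  "alt i j 0 = []"
| "alt i j (Suc n) = i # alt j i n"

lemma alt_concat: "concat (replicate m [i, j]) = alt i j (2 * m)"
  by (induction m) auto

locale coxsys = group G for G :: "('a, 'b) monoid_scheme" (structure) +
  fixes I :: "'i set" and s :: "'i \<Rightarrow> 'a" and m :: "'i \<Rightarrow> 'i \<Rightarrow> nat"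
  assumes s_carr: "s ` I \<subseteq> carrier G"
    and gen: "generate G (s ` I) = carrier G"
    and cm: "coxeter_matrix I m"
    and pres: "\<forall>ws \<in> lists I. word_prod G s ws = \<one> \<longleftrightarrow> cox_equiv I m ws []"
begin

abbreviation wp where "wp \<equiv> word_prod G s"
abbreviation len where "len \<equiv> cox_length G I s"

lemma s_in [simp]: "i \<in> I \<Longrightarrow> s i \<in> carrier G"
  using s_carr by auto

lemma wp_Nil [simp]: "wp [] = \<one>"
  by (simp add: word_prod_def)

lemma wp_Cons [simp]: "wp (i # a) = s i \<otimes> wp a"
  by (simp add: word_prod_def)

lemma wp_carr [simp]: "a \<in> lists I \<Longrightarrow> wp a \<in> carrier G"
  by (induction a) auto

lemma wp_append: "a \<in> lists I \<Longrightarrow> b \<in> lists I \<Longrightarrow> wp (a @ b) = wp a \<otimes> wp b"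
  by (induction a) (auto simp: m_assoc)

lemma relator_lists: "r \<in> cox_relators I m \<Longrightarrow> r \<in> lists I"
  unfolding cox_relators_def by auto

lemma relator_even: "r \<in> cox_relators I m \<Longrightarrow> even (length r)"
  unfolding cox_relators_def by (auto simp: length_concat sum_list_replicate)

lemma relator_wp: "r \<in> cox_relators I m \<Longrightarrow> wp r = \<one>"
proof -
  assume r: "r \<in> cox_relators I m"
  have "cox_del I m r []" unfolding cox_del_def using r by force
  then have "cox_equiv I m r []" unfolding cox_equiv_def by auto
  then show ?thesis using pres relator_lists[OF r] by auto
qed

lemma s_sq [simp]: "i \<in> I \<Longrightarrow> s i \<otimes> s i = \<one>"
proof -
  assume i: "i \<in> I"
  have "[i, i] \<in> cox_relators I m" unfolding cox_relators_def using i by auto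
  from relator_wp[OF this] i show ?thesis by simp
qed

lemma s_sq' [simp]: "i \<in> I \<Longrightarrow> x \<in> carrier G \<Longrightarrow> s i \<otimes> (s i \<otimes> x) = x"
  by (simp flip: m_assoc)

lemma inv_s [simp]: "i \<in> I \<Longrightarrow> inv (s i) = s i"
  by (rule inv_equality) auto

lemma wp_rev: "a \<in> lists I \<Longrightarrow> wp (rev a) = inv (wp a)"
  by (induction a) (auto simp: wp_append inv_mult_group in_lists_conv_set)

lemma wp_exists: "g \<in> carrier G \<Longrightarrow> \<exists>a \<in> lists I. wp a = g"
proof -
  assume "g \<in> carrier G"
  then have "g \<in> generate G (s ` I)" using gen by simp
  then show ?thesis
  proof (induction rule: generate.induct)
    case one
    then show ?case by (intro bexI[of _ "[]"]) auto
  next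
    case (incl h)
    then obtain i where "i \<in> I" "h = s i" by auto
    then show ?case by (intro bexI[of _ "[i]"]) auto
  next
    case (inv h)
    then obtain i where "i \<in> I" "h = s i" by auto
    then show ?case by (intro bexI[of _ "[i]"]) auto
  next
    case (eng h1 h2)
    then obtain a b where "a \<in> lists I" "b \<in> lists I" "wp a = h1" "wp b = h2" by blast
    then show ?case by (intro bexI[of _ "a @ b"]) (auto simp: wp_append)
  qed
qed

lemma pflip_append:
  "a \<in> lists I \<Longrightarrow> y \<in> carrier G \<Longrightarrow>
   pflip G s (a @ b) y = (pflip G s a y \<noteq> pflip G s b (inv (wp a) \<otimes> y \<otimes> wp a))"
proof (induction a arbitrary: y)
  case Nil
  then show ?case by simp
next
  case (Cons i a)
  then have i: "i \<in> I" and a: "a \<in> lists I" by auto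
  have "pflip G s ((i # a) @ b) y = ((y = s i) \<noteq> pflip G s (a @ b) (s i \<otimes> y \<otimes> s i))" by simp
  also have "\<dots> = ((y = s i) \<noteq> (pflip G s a (s i \<otimes> y \<otimes> s i) \<noteq>
     pflip G s b (inv (wp a) \<otimes> (s i \<otimes> y \<otimes> s i) \<otimes> wp a)))"
    using Cons i a by simp
  also have "inv (wp a) \<otimes> (s i \<otimes> y \<otimes> s i) \<otimes> wp a = inv (wp (i # a)) \<otimes> y \<otimes> wp (i # a)"
    using i a Cons.prems by (simp add: inv_mult_group m_assoc)
  finally show ?case unfolding pflip.simps(2)[of G s i a] by blast
qed


lemma conj_s_inj: "i \<in> I \<Longrightarrow> x \<in> carrier G \<Longrightarrow> z \<in> carrier G \<Longrightarrow>
   (s i \<otimes> x \<otimes> s i = z) \<longleftrightarrow> (x = s i \<otimes> z \<otimes> s i)"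
proof
  assume i: "i \<in> I" and x: "x \<in> carrier G" and z: "z \<in> carrier G" and e: "s i \<otimes> x \<otimes> s i = z"
  have "s i \<otimes> z \<otimes> s i = s i \<otimes> (s i \<otimes> x \<otimes> s i) \<otimes> s i" using e by simp
  also have "\<dots> = x" using i x by (simp add: m_assoc)
  finally show "x = s i \<otimes> z \<otimes> s i" by simp
next
  assume i: "i \<in> I" and x: "x \<in> carrier G" and z: "z \<in> carrier G" and e: "x = s i \<otimes> z \<otimes> s i"
  show "s i \<otimes> x \<otimes> s i = z" using e i z by (simp add: m_assoc)
qed

lemma mult_s_one: "i \<in> I \<Longrightarrow> y \<in> carrier G \<Longrightarrow> (y \<otimes> s i = \<one>) = (y = s i)"
  by (metis inv_s inv_equality s_sq s_in)

definition pal :: "'a \<Rightarrow> 'a \<Rightarrow> nat \<Rightarrow> 'a" where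
  "pal a b k = (a \<otimes> b) [^] k \<otimes> a"

lemma pal_carr [simp]: "a \<in> carrier G \<Longrightarrow> b \<in> carrier G \<Longrightarrow> pal a b k \<in> carrier G"
  by (simp add: pal_def)

lemma pow_swap: "a \<in> carrier G \<Longrightarrow> b \<in> carrier G \<Longrightarrow> a \<otimes> (b \<otimes> a) [^] (k::nat) = (a \<otimes> b) [^] k \<otimes> a"
proof (induction k)
  case 0
  then show ?case by simp
next
  case (Suc k)
  have "a \<otimes> (b \<otimes> a) [^] Suc k = (a \<otimes> (b \<otimes> a) [^] k) \<otimes> (b \<otimes> a)"
    using Suc.prems by (simp add: m_assoc)
  also have "\<dots> = (a \<otimes> b) [^] k \<otimes> a \<otimes> (b \<otimes> a)" using Suc by simp
  also have "\<dots> = (a \<otimes> b) [^] Suc k \<otimes> a" using Suc.prems by (simp add: m_assoc)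
  finally show ?case .
qed

lemma pal_0 [simp]: "a \<in> carrier G \<Longrightarrow> pal a b 0 = a"
  by (simp add: pal_def)

lemma pal_Suc: "a \<in> carrier G \<Longrightarrow> b \<in> carrier G \<Longrightarrow> pal a b (Suc k) = a \<otimes> pal b a k \<otimes> a"
proof -
  assume a: "a \<in> carrier G" and b: "b \<in> carrier G"
  have "a \<otimes> pal b a k \<otimes> a = (a \<otimes> (b \<otimes> a) [^] k) \<otimes> (b \<otimes> a)"
    using a b by (simp add: pal_def m_assoc)
  also have "\<dots> = (a \<otimes> b) [^] k \<otimes> a \<otimes> (b \<otimes> a)" using a b pow_swap by simp
  also have "\<dots> = pal a b (Suc k)" using a b by (simp add: pal_def m_assoc)
  finally show ?thesis by simp
qed

lemma pflip_alt:
  "i \<in> I \<Longrightarrow> j \<in> I \<Longrightarrow> y \<in> carrier G \<Longrightarrow>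
   pflip G s (alt i j n) y = odd (\<Sum>k<n. if y = pal (s i) (s j) k then 1 else 0::nat)"
proof (induction n arbitrary: i j y)
  case 0
  then show ?case by simp
next
  case (Suc n)
  have eq: "(y = pal (s i) (s j) (Suc k)) = (s i \<otimes> y \<otimes> s i = pal (s j) (s i) k)" for k
    using Suc.prems by (simp add: pal_Suc conj_s_inj)
  have "pflip G s (alt i j (Suc n)) y = ((y = s i) \<noteq> pflip G s (alt j i n) (s i \<otimes> y \<otimes> s i))"
    by simp
  also have "\<dots> = ((y = s i) \<noteq> odd (\<Sum>k<n. if s i \<otimes> y \<otimes> s i = pal (s j) (s i) k then 1 else 0::nat))"
    using Suc by simp
  also have "\<dots> = ((y = s i) \<noteq> odd (\<Sum>k<n. if y = pal (s i) (s j) (Suc k) then 1 else 0::nat))"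
    using eq by simp
  also have "\<dots> = odd (\<Sum>k<Suc n. if y = pal (s i) (s j) k then 1 else 0::nat)"
    using Suc.prems unfolding sum.lessThan_Suc_shift by simp
  finally show ?case .
qed

lemma wp_alt: "i \<in> I \<Longrightarrow> j \<in> I \<Longrightarrow> wp (alt i j (2 * n)) = (s i \<otimes> s j) [^] n"
proof (induction n)
  case 0
  then show ?case by simp
next
  case (Suc n)
  have "alt i j (2 * Suc n) = i # j # alt i j (2 * n)" by (simp add: numeral_2_eq_2)
  then have "wp (alt i j (2 * Suc n)) = s i \<otimes> (s j \<otimes> (s i \<otimes> s j) [^] n)" using Suc by simp
  also have "\<dots> = (s i \<otimes> s j) [^] Suc n"
    using nat_pow_Suc2[of "s i \<otimes> s j" n] Suc.prems by (simp add: m_assoc)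
  finally show ?case .
qed

lemma sum_split_nat: "(\<Sum>k<(a::nat) + b. f k) = (\<Sum>k<a. f k) + (\<Sum>k<b. f (a + k)::nat)"
  by (induction b) auto

lemma pflip_relator: "r \<in> cox_relators I m \<Longrightarrow> y \<in> carrier G \<Longrightarrow> \<not> pflip G s r y"
proof -
  assume r: "r \<in> cox_relators I m" and y: "y \<in> carrier G"
  show ?thesis
  proof (cases "\<exists>i\<in>I. r = [i, i]")
    case True
    then obtain i where i: "i \<in> I" and ri: "r = [i, i]" by auto
    have "(s i \<otimes> y \<otimes> s i = s i) = (y = s i)"
      using i y by (simp add: conj_s_inj m_assoc mult_s_one)
    then show ?thesis using ri by simp
  next
    case False
    then obtain i j where i: "i \<in> I" and j: "j \<in> I"
      and ri: "r = concat (replicate (m i j) [i, j])"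
      using r unfolding cox_relators_def by auto
    define n where "n = m i j"
    have "wp r = \<one>" using relator_wp[OF r] .
    then have per: "(s i \<otimes> s j) [^] n = \<one>" using ri wp_alt[OF i j] alt_concat n_def by metis
    have pp: "pal (s i) (s j) (n + k) = pal (s i) (s j) k" for k
    proof -
      have "pal (s i) (s j) (n + k) = (s i \<otimes> s j) [^] n \<otimes> (s i \<otimes> s j) [^] k \<otimes> s i"
        using i j by (simp add: pal_def nat_pow_mult)
      then show ?thesis using per i j by (simp add: pal_def)
    qed
    have "pflip G s r y = odd (\<Sum>k<n + n. if y = pal (s i) (s j) k then 1 else 0::nat)"
      using ri alt_concat pflip_alt[OF i j y] n_def by (metis mult_2)
    also have "\<dots> = odd (2 * (\<Sum>k<n. if y = pal (s i) (s j) k then 1 else 0::nat))"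
      unfolding sum_split_nat pp by simp
    finally show ?thesis by simp
  qed
qed


lemma del_step:
  assumes "cox_del I m a b"
  shows "(a \<in> lists I \<longleftrightarrow> b \<in> lists I) \<and> (a \<in> lists I \<longrightarrow> wp a = wp b \<and>
     even (length a) = even (length b) \<and> (\<forall>y\<in>carrier G. pflip G s a y = pflip G s b y))"
proof -
  obtain u r v where r: "r \<in> cox_relators I m" and a: "a = u @ r @ v" and b: "b = u @ v"
    using assms unfolding cox_del_def by blast
  have rl: "r \<in> lists I" using relator_lists[OF r] .
  have 1: "a \<in> lists I \<longleftrightarrow> b \<in> lists I" using a b rl by auto
  have 2: "wp a = wp b \<and> even (length a) = even (length b) \<and> (\<forall>y\<in>carrier G. pflip G s a y = pflip G s b y)"
    if al: "a \<in> lists I"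
  proof -
    have u: "u \<in> lists I" and v: "v \<in> lists I" using al a by auto
    have w1: "wp r = \<one>" using relator_wp[OF r] .
    have "wp a = wp b" unfolding a b using u v rl w1 by (simp add: wp_append)
    moreover have "even (length a) = even (length b)" unfolding a b using relator_even[OF r] by auto
    moreover have "pflip G s a y = pflip G s b y" if y: "y \<in> carrier G" for y
    proof -
      define y' where "y' = inv (wp u) \<otimes> y \<otimes> wp u"
      have y': "y' \<in> carrier G" using y u by (simp add: y'_def)
      have "pflip G s a y = (pflip G s u y \<noteq> pflip G s (r @ v) y')"
        unfolding a y'_def by (rule pflip_append[OF u y])
      also have "pflip G s (r @ v) y' = (pflip G s r y' \<noteq> pflip G s v (inv (wp r) \<otimes> y' \<otimes> wp r))"
        using pflip_append[OF rl y'] .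
      also have "inv (wp r) \<otimes> y' \<otimes> wp r = y'" using w1 y' by simp
      also have "pflip G s r y' = False" using pflip_relator[OF r y'] by simp
      finally have "pflip G s a y = (pflip G s u y \<noteq> pflip G s v y')" by simp
      also have "\<dots> = pflip G s b y" unfolding b y'_def by (rule pflip_append[OF u y, symmetric])
      finally show ?thesis .
    qed
    ultimately show ?thesis by blast
  qed
  show ?thesis using 1 2 by blast
qed

lemma chain:
  assumes "(symclp (cox_del I m))\<^sup>*\<^sup>* a b" and "a \<in> lists I"
  shows "b \<in> lists I \<and> wp a = wp b \<and> even (length a) = even (length b) \<and>
     (\<forall>y\<in>carrier G. pflip G s a y = pflip G s b y)"
  using assms
proof (induction rule: rtranclp_induct)
  case base
  then show ?case by simp
next
  case (step b c)
  have IH: "b \<in> lists I \<and> wp a = wp b \<and> even (length a) = even (length b) \<and>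
     (\<forall>y\<in>carrier G. pflip G s a y = pflip G s b y)" using step.IH step.prems .
  then have bl: "b \<in> lists I" by blast
  have cd: "c \<in> lists I \<and> wp b = wp c \<and> even (length b) = even (length c) \<and>
     (\<forall>y\<in>carrier G. pflip G s b y = pflip G s c y)"
  proof (cases "cox_del I m b c")
    case True
    show ?thesis using del_step[OF True] bl by blast
  next
    case False
    then have "cox_del I m c b" using step.hyps(2) unfolding symclp_def by blast
    from del_step[OF this] bl show ?thesis by (metis (no_types))
  qed
  show ?case
  proof (intro conjI ballI)
    show "c \<in> lists I" using cd by blast
    show "wp a = wp c" using cd IH by simp
    show "even (length a) = even (length c)" using cd IH by simp
    fix y assume "y \<in> carrier G"
    then show "pflip G s a y = pflip G s c y" using cd IH by simp
  qed
qed

lemma one_word: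
  assumes "c \<in> lists I" and "wp c = \<one>"
  shows "even (length c) \<and> (\<forall>y\<in>carrier G. \<not> pflip G s c y)"
proof -
  have "cox_equiv I m c []" using pres assms by auto
  then have "(symclp (cox_del I m))\<^sup>*\<^sup>* c []" unfolding cox_equiv_def .
  from chain[OF this assms(1)] show ?thesis by simp
qed

lemma invariance:
  assumes a: "a \<in> lists I" and b: "b \<in> lists I" and e: "wp a = wp b"
  shows "even (length a) = even (length b) \<and> (\<forall>y\<in>carrier G. pflip G s a y = pflip G s b y)"
proof -
  have rb: "rev b \<in> lists I" using b by (simp add: in_lists_conv_set)
  have w1: "wp (a @ rev b) = \<one>" using a b rb e by (simp add: wp_append wp_rev)
  have w2: "wp (b @ rev b) = \<one>" using a b rb e by (simp add: wp_append wp_rev)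
  have ab: "a @ rev b \<in> lists I" "b @ rev b \<in> lists I" using a b rb by auto
  have "even (length (a @ rev b))" using one_word[OF ab(1) w1] by simp
  then have p: "even (length a) = even (length b)" by simp
  have "pflip G s a y = pflip G s b y" if y: "y \<in> carrier G" for y
  proof -
    have "\<not> pflip G s (a @ rev b) y" "\<not> pflip G s (b @ rev b) y" using one_word[OF ab(1) w1] one_word[OF ab(2) w2] y by auto
    moreover note P1 = pflip_append[OF a y, of "rev b"]
    moreover note P2 = pflip_append[OF b y, of "rev b"]
    ultimately show ?thesis unfolding e by blast
  qed
  with p show ?thesis by blast
qed

lemma len_le: "a \<in> lists I \<Longrightarrow> len (wp a) \<le> length a"
  unfolding cox_length_def by (rule Least_le) blast

lemma len_word: "g \<in> carrier G \<Longrightarrow> \<exists>a\<in>lists I. length a = len g \<and> wp a = g"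
proof -
  assume g: "g \<in> carrier G"
  then obtain a where "a \<in> lists I" "wp a = g" using wp_exists by blast
  then have "\<exists>n. \<exists>ws \<in> lists I. length ws = n \<and> wp ws = g" by blast
  then show ?thesis unfolding cox_length_def by (rule LeastI_ex)
qed

lemma len_parity: "a \<in> lists I \<Longrightarrow> even (len (wp a)) = even (length a)"
proof -
  assume a: "a \<in> lists I"
  obtain b where b: "b \<in> lists I" "length b = len (wp a)" "wp b = wp a" using len_word[of "wp a"] a by auto
  show ?thesis using invariance[OF b(1) a b(3)] b(2) by simp
qed

lemma len_s:
  assumes g: "g \<in> carrier G" and i: "i \<in> I"
  shows "len (g \<otimes> s i) \<noteq> len g" "len (g \<otimes> s i) \<le> len g + 1" "len g \<le> len (g \<otimes> s i) + 1"
proof -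
  obtain a where a: "a \<in> lists I" "length a = len g" "wp a = g" using len_word[OF g] by auto
  obtain b where b: "b \<in> lists I" "length b = len (g \<otimes> s i)" "wp b = g \<otimes> s i" using len_word[of "g \<otimes> s i"] g i by auto
  have wa: "wp (a @ [i]) = g \<otimes> s i" using a i by (simp add: wp_append)
  have wb: "wp (b @ [i]) = g" using b i g by (simp add: wp_append m_assoc)
  have ai: "a @ [i] \<in> lists I" "b @ [i] \<in> lists I" using a b i by auto
  show "len (g \<otimes> s i) \<le> len g + 1" using len_le[OF ai(1)] wa a by simp
  show "len g \<le> len (g \<otimes> s i) + 1" using len_le[OF ai(2)] wb b by simp
  show "len (g \<otimes> s i) \<noteq> len g" using len_parity[OF ai(1)] wa a by auto
qed

lemma len_one [simp]: "len \<one> = 0"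
  using len_le[of "[]"] by simp

lemma len_zero: "g \<in> carrier G \<Longrightarrow> len g = 0 \<Longrightarrow> g = \<one>"
proof -
  assume g: "g \<in> carrier G" and l: "len g = 0"
  obtain a where "a \<in> lists I" "length a = len g" "wp a = g" using len_word[OF g] by blast
  then show ?thesis using l by simp
qed

lemma deletion:
  "a \<in> lists I \<Longrightarrow> y \<in> carrier G \<Longrightarrow> pflip G s a y \<Longrightarrow>
   \<exists>p<length a. y \<otimes> wp a = wp (take p a @ drop (Suc p) a)"
proof (induction a arbitrary: y)
  case Nil
  then show ?case by simp
next
  case (Cons i a)
  then have i: "i \<in> I" and a: "a \<in> lists I" by auto
  show ?case
  proof (cases "y = s i")
    case True
    then show ?thesis using i a by (intro exI[of _ 0]) (simp flip: m_assoc)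
  next
    case False
    then have "pflip G s a (s i \<otimes> y \<otimes> s i)" using Cons.prems by simp
    then obtain p where p: "p < length a"
      and e: "s i \<otimes> y \<otimes> s i \<otimes> wp a = wp (take p a @ drop (Suc p) a)"
      using Cons.IH[OF a, of "s i \<otimes> y \<otimes> s i"] i Cons.prems by auto
    have "y \<otimes> wp (i # a) = s i \<otimes> (s i \<otimes> y \<otimes> s i \<otimes> wp a)"
      using i a Cons.prems by (simp add: m_assoc)
    also have "\<dots> = wp (take (Suc p) (i # a) @ drop (Suc (Suc p)) (i # a))" using e by simp
    finally show ?thesis using p by (intro exI[of _ "Suc p"]) simp
  qed
qed


abbreviation refls where "refls \<equiv> reflections G I s"
abbreviation bstep where "bstep \<equiv> bruhat_step G I s"
abbreviation ble where "ble \<equiv> bruhat_le G I s"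

lemma inv_cancel_l [simp]: "x \<in> carrier G \<Longrightarrow> y \<in> carrier G \<Longrightarrow> inv x \<otimes> (x \<otimes> y) = y"
  by (simp flip: m_assoc)

lemma inv_cancel_r [simp]: "x \<in> carrier G \<Longrightarrow> y \<in> carrier G \<Longrightarrow> x \<otimes> (inv x \<otimes> y) = y"
  by (simp flip: m_assoc)

lemma refl_carr: "t \<in> refls \<Longrightarrow> t \<in> carrier G"
  unfolding reflections_def by auto

lemma refl_s: "i \<in> I \<Longrightarrow> s i \<in> refls"
  unfolding reflections_def by (rule CollectI, rule exI[of _ \<one>], rule exI[of _ i]) simp

lemma refl_conj: "t \<in> refls \<Longrightarrow> v \<in> carrier G \<Longrightarrow> v \<otimes> t \<otimes> inv v \<in> refls"
proof -
  assume t: "t \<in> refls" and v: "v \<in> carrier G"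
  then obtain u i where u: "u \<in> carrier G" and i: "i \<in> I" and tu: "t = u \<otimes> s i \<otimes> inv u"
    unfolding reflections_def by auto
  have "v \<otimes> t \<otimes> inv v = (v \<otimes> u) \<otimes> s i \<otimes> inv (v \<otimes> u)"
    using u v i tu by (simp add: m_assoc inv_mult_group)
  then show ?thesis unfolding reflections_def using u v i by blast
qed

lemma refl_sq: "t \<in> refls \<Longrightarrow> t \<otimes> t = \<one>"
proof -
  assume t: "t \<in> refls"
  then obtain u i where u: "u \<in> carrier G" and i: "i \<in> I" and tu: "t = u \<otimes> s i \<otimes> inv u"
    unfolding reflections_def by auto
  have "t \<otimes> t = u \<otimes> (s i \<otimes> (inv u \<otimes> u) \<otimes> s i) \<otimes> inv u"
    using u i tu by (simp add: m_assoc)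
  also have "\<dots> = \<one>" using u i by simp
  finally show ?thesis .
qed

lemma refl_inv: "t \<in> refls \<Longrightarrow> inv t = t"
  using refl_sq refl_carr inv_equality by blast

lemma refl_pflip:
  assumes t: "t \<in> refls" and a: "a \<in> lists I" and e: "wp a = t"
  shows "pflip G s a t"
proof -
  obtain u i where u: "u \<in> carrier G" and i: "i \<in> I" and tu: "t = u \<otimes> s i \<otimes> inv u"
    using t unfolding reflections_def by auto
  obtain c where c: "c \<in> lists I" and wc: "wp c = u" using wp_exists[OF u] by blast
  have rc: "rev c \<in> lists I" using c by (simp add: in_lists_conv_set)
  define d where "d = c @ (i # rev c)"
  have d: "d \<in> lists I" using c rc i d_def by simp
  have wd: "wp d = t" using c rc i wc tu u by (simp add: d_def wp_append wp_rev m_assoc)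
  have tc: "t \<in> carrier G" using refl_carr[OF t] .
  have conj: "inv u \<otimes> t \<otimes> u = s i" using tu u i by (simp add: m_assoc)
  have "pflip G s d t = (pflip G s c t \<noteq> pflip G s (i # rev c) (s i))"
    unfolding d_def using pflip_append[OF c tc, of "i # rev c"] wc conj by simp
  also have "pflip G s (i # rev c) (s i) = (\<not> pflip G s (rev c) (s i))"
    using i by (simp add: m_assoc)
  finally have 1: "pflip G s d t = (pflip G s c t \<noteq> (\<not> pflip G s (rev c) (s i)))" .
  have wcc: "wp (c @ rev c) = \<one>" using c rc u wc by (simp add: wp_append wp_rev)
  have "\<not> pflip G s (c @ rev c) t" using one_word[OF _ wcc] c rc tc by auto
  then have 2: "pflip G s c t = pflip G s (rev c) (s i)"
    using pflip_append[OF c tc, of "rev c"] wc conj by simp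
  have "pflip G s d t" using 1 2 by simp
  then show ?thesis using invariance[OF a d] e wd tc by simp
qed

lemma strong_exchange:
  assumes t: "t \<in> refls" and g: "g \<in> carrier G" and l: "len (t \<otimes> g) < len g"
    and a: "a \<in> lists I" and e: "wp a = g"
  shows "\<exists>p<length a. t \<otimes> g = wp (take p a @ drop (Suc p) a)"
proof -
  have tc: "t \<in> carrier G" using refl_carr[OF t] .
  obtain b where b: "b \<in> lists I" "length b = len (t \<otimes> g)" "wp b = t \<otimes> g"
    using len_word[of "t \<otimes> g"] tc g by auto
  obtain c where c: "c \<in> lists I" "wp c = t" using wp_exists[OF tc] by blast
  have pc: "pflip G s c t" using refl_pflip[OF t c] .
  have cb: "c @ b \<in> lists I" using b c by simp
  have wcb: "wp (c @ b) = g" using b c tc g refl_sq[OF t] by (simp add: wp_append flip: m_assoc)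
  have ttt: "inv t \<otimes> t \<otimes> t = t" using refl_inv[OF t] refl_sq[OF t] tc by simp
  have "pflip G s a t = pflip G s (c @ b) t" using invariance[OF a cb] e wcb tc by simp
  also have "\<dots> = (pflip G s c t \<noteq> pflip G s b t)" using pflip_append[OF c(1) tc, of b] c(2) ttt by simp
  finally have pa: "pflip G s a t = (\<not> pflip G s b t)" using pc by simp
  show ?thesis
  proof (cases "pflip G s a t")
    case True
    from deletion[OF a tc True] e show ?thesis by simp
  next
    case False
    then have "pflip G s b t" using pa by simp
    from deletion[OF b(1) tc this] obtain p where p: "p < length b"
      and ep: "t \<otimes> wp b = wp (take p b @ drop (Suc p) b)" by blast
    have "t \<otimes> wp b = g" using b(3) tc g refl_sq[OF t] by (simp flip: m_assoc)
    moreover have "take p b @ drop (Suc p) b \<in> lists I" using b(1)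
      by (auto simp: in_lists_conv_set dest: in_set_dropD in_set_takeD)
    ultimately have "len g \<le> length (take p b @ drop (Suc p) b)" using ep len_le by metis
    also have "\<dots> < length b" using p by simp
    finally show ?thesis using l b(2) by simp
  qed
qed


lemma bstep_carr: "bstep x y \<Longrightarrow> x \<in> carrier G \<and> y \<in> carrier G"
  unfolding bruhat_step_def using refl_carr by auto

lemma bstep_len: "bstep x y \<Longrightarrow> len x < len y"
  unfolding bruhat_step_def by auto

lemma bstep_ble: "bstep x y \<Longrightarrow> ble x y"
  unfolding bruhat_le_def using bstep_carr by auto

lemma ble_refl: "x \<in> carrier G \<Longrightarrow> ble x x"
  unfolding bruhat_le_def by auto

lemma ble_trans: "ble x y \<Longrightarrow> ble y z \<Longrightarrow> ble x z"
  unfolding bruhat_le_def by auto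

lemma bstep_refl: "x \<in> carrier G \<Longrightarrow> t \<in> refls \<Longrightarrow> len x < len (x \<otimes> t) \<Longrightarrow> bstep x (x \<otimes> t)"
  unfolding bruhat_step_def by auto

lemma bstep_s_down: "y \<in> carrier G \<Longrightarrow> i \<in> I \<Longrightarrow> len (y \<otimes> s i) < len y \<Longrightarrow> bstep (y \<otimes> s i) y"
proof -
  assume y: "y \<in> carrier G" and i: "i \<in> I" and l: "len (y \<otimes> s i) < len y"
  have e: "(y \<otimes> s i) \<otimes> s i = y" using y i by (simp add: m_assoc)
  have "bstep (y \<otimes> s i) ((y \<otimes> s i) \<otimes> s i)"
    by (rule bstep_refl) (use y i l e refl_s in auto)
  then show ?thesis using e by simp
qed

lemma Z_step:
  assumes st: "bstep u v" and k: "k \<in> I"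
  shows "ble (u \<otimes> s k) v \<or> ble (u \<otimes> s k) (v \<otimes> s k)"
proof -
  obtain t where t: "t \<in> refls" and vt: "v = u \<otimes> t" and u: "u \<in> carrier G" and luv: "len u < len v"
    using st unfolding bruhat_step_def by auto
  have tc: "t \<in> carrier G" using refl_carr[OF t] .
  have v: "v \<in> carrier G" using vt u tc by simp
  define us where "us = u \<otimes> s k"
  define vs where "vs = v \<otimes> s k"
  have usc: "us \<in> carrier G" and vsc: "vs \<in> carrier G" using u v k us_def vs_def by auto
  define t' where "t' = s k \<otimes> t \<otimes> inv (s k)"
  have t': "t' \<in> refls" using refl_conj[OF t, of "s k"] k t'_def by simp
  have vs_eq: "vs = us \<otimes> t'" using u tc k by (simp add: vs_def us_def t'_def vt m_assoc)
  show ?thesis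
  proof (cases "len us < len vs")
    case True
    then have "bstep us vs" using bstep_refl[OF usc t'] vs_eq by simp
    then show ?thesis using bstep_ble us_def vs_def by simp
  next
    case F1: False
    show ?thesis
    proof (cases "len us < len u")
      case True
      have e: "us \<otimes> s k = u" using u k by (simp add: us_def m_assoc)
      have "bstep us (us \<otimes> s k)"
        by (rule bstep_refl[OF usc refl_s[OF k]]) (use True e in simp)
      then have "bstep us u" using e by simp
      then have "ble us u" by (rule bstep_ble)
      moreover have "ble u v" using bstep_ble[OF st] .
      ultimately show ?thesis using ble_trans us_def by blast
    next
      case F2: False
      have a1: "len us \<noteq> len u" "len us \<le> len u + 1" using len_s[OF u k] us_def by auto
      have a2: "len vs \<noteq> len v" "len v \<le> len vs + 1" using len_s[OF v k] vs_def by auto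
      have lus: "len us = len u + 1" using a1 F2 by simp
      have lvs: "len v = len vs + 1" using a2 F1 lus luv by simp
      obtain b where b: "b \<in> lists I" "length b = len vs" "wp b = vs"
        using len_word[OF vsc] by blast
      define a where "a = b @ [k]"
      have a: "a \<in> lists I" using b k a_def by simp
      have wa: "wp a = v" using b k v by (simp add: a_def wp_append vs_def m_assoc)
      define t'' where "t'' = v \<otimes> t \<otimes> inv v"
      have t'': "t'' \<in> refls" using refl_conj[OF t v] t''_def by simp
      have tv: "t'' \<otimes> v = u" using v tc u refl_sq[OF t] by (simp add: t''_def vt m_assoc)
      obtain p where p: "p < length a" and ep: "t'' \<otimes> v = wp (take p a @ drop (Suc p) a)"
        using strong_exchange[OF t'' v _ a wa] tv luv by auto
      show ?thesis
      proof (cases "p = length b")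
        case True
        then have "u = vs" using ep tv b by (simp add: a_def)
        then have "us = v" using v k by (simp add: us_def vs_def m_assoc)
        then show ?thesis using ble_refl v us_def by simp
      next
        case False
        then have pb: "p < length b" using p a_def by simp
        define b' where "b' = take p b @ drop (Suc p) b"
        have b': "b' \<in> lists I" using b(1)
          by (auto simp: b'_def in_lists_conv_set dest: in_set_dropD in_set_takeD)
        have "take p a @ drop (Suc p) a = b' @ [k]" using pb by (simp add: a_def b'_def)
        then have "u = wp b' \<otimes> s k" using ep tv b' k by (simp add: wp_append)
        then have "us = wp b'" using b' k by (simp add: us_def m_assoc)
        then have "len us \<le> length b'" using len_le[OF b'] by simp
        also have "\<dots> < length b" using pb by (simp add: b'_def)
        finally show ?thesis using b(2) lus lvs luv F1 by simp
      qed
    qed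
  qed
qed

lemma lifting:
  assumes uv: "ble u v" and k: "k \<in> I" and l: "len (v \<otimes> s k) < len v"
  shows "ble (u \<otimes> s k) v"
proof -
  have v: "v \<in> carrier G" using uv unfolding bruhat_le_def by simp
  have "bstep\<^sup>*\<^sup>* u v" using uv unfolding bruhat_le_def by simp
  then show ?thesis
  proof (induction rule: converse_rtranclp_induct)
    case base
    show ?case using bstep_ble[OF bstep_s_down[OF v k l]] .
  next
    case (step u w)
    have wv: "ble w v" using step.hyps(2) bstep_carr[OF step.hyps(1)] v unfolding bruhat_le_def by simp
    from Z_step[OF step.hyps(1) k] show ?case
    proof
      assume "ble (u \<otimes> s k) w"
      then show ?thesis using wv ble_trans by blast
    next
      assume "ble (u \<otimes> s k) (w \<otimes> s k)"
      then show ?thesis using step.IH ble_trans by blast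
    qed
  qed
qed

lemma ble_one: "ble w \<one> \<Longrightarrow> w = \<one>"
proof -
  assume "ble w \<one>"
  then have "bstep\<^sup>*\<^sup>* w \<one>" unfolding bruhat_le_def by simp
  then show ?thesis
  proof (cases rule: rtranclp.cases)
    case rtrancl_refl
    then show ?thesis by simp
  next
    case (rtrancl_into_rtrancl b)
    then show ?thesis using bstep_len[of b \<one>] by simp
  qed
qed

lemma mem_set_mult: "x \<in> H \<Longrightarrow> z \<in> K \<Longrightarrow> x \<otimes> z \<in> H <#> K"
  unfolding set_mult_def by blast

lemma main:
  assumes w: "w \<in> carrier G" and w1: "w \<noteq> \<one>" and k: "k \<in> I"
  shows "y \<in> carrier G \<Longrightarrow> \<not> ble (w \<otimes> s k) y \<Longrightarrow>
    y \<in> annex G I s w <#> generate G (s ` (I - {k}))"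
proof (induction "len y" arbitrary: y rule: less_induct)
  case less
  note y = less.prems(1)
  have "s ` (I - {k}) \<subseteq> carrier G" using s_carr by auto
  then have gsub: "generate G (s ` (I - {k})) \<subseteq> carrier G" by (rule generate_incl)
  show ?case
  proof (cases "\<exists>j \<in> I - {k}. len (y \<otimes> s j) < len y")
    case True
    then obtain j where j: "j \<in> I - {k}" and lj: "len (y \<otimes> s j) < len y" by blast
    have jI: "j \<in> I" using j by simp
    have y'c: "y \<otimes> s j \<in> carrier G" using y jI by simp
    have "ble (y \<otimes> s j) y" using bstep_ble[OF bstep_s_down[OF y jI lj]] .
    then have "\<not> ble (w \<otimes> s k) (y \<otimes> s j)"
      using less.prems(2) ble_trans[of "w \<otimes> s k" "y \<otimes> s j" y] by blast
    then have "y \<otimes> s j \<in> annex G I s w <#> generate G (s ` (I - {k}))"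
      by (rule less.hyps[OF lj y'c])
    then obtain x z where x: "x \<in> annex G I s w" and z: "z \<in> generate G (s ` (I - {k}))"
      and yxz: "y \<otimes> s j = x \<otimes> z" unfolding set_mult_def by blast
    have xc: "x \<in> carrier G" using x unfolding annex_def by simp
    have zc: "z \<in> carrier G" using z gsub by blast
    have z': "z \<otimes> s j \<in> generate G (s ` (I - {k}))"
      by (rule generate.eng[OF z generate.incl]) (use j in auto)
    have "y = (y \<otimes> s j) \<otimes> s j" using y jI by (simp add: m_assoc)
    also have "\<dots> = x \<otimes> (z \<otimes> s j)" using yxz xc zc jI by (simp add: m_assoc)
    finally show ?thesis using mem_set_mult[OF x z'] by simp
  next
    case F: False
    show ?thesis
    proof (cases "ble w y")
      case False
      then have "y \<in> annex G I s w" unfolding annex_def using y by simp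
      moreover have "\<one> \<in> generate G (s ` (I - {k}))" by (rule generate.one)
      moreover have "y = y \<otimes> \<one>" using y by simp
      ultimately show ?thesis using mem_set_mult by metis
    next
      case True
      have nk: "\<not> len (y \<otimes> s k) < len y"
      proof
        assume "len (y \<otimes> s k) < len y"
        from lifting[OF True k this] less.prems(2) show False by simp
      qed
      have "y = \<one>"
      proof (rule ccontr)
        assume "y \<noteq> \<one>"
        then have "len y \<noteq> 0" using len_zero y by blast
        obtain a where a: "a \<in> lists I" "length a = len y" "wp a = y" using len_word[OF y] by blast
        then have "a \<noteq> []" using \<open>len y \<noteq> 0\<close> by auto
        then obtain a' i where ai: "a = a' @ [i]" by (metis rev_exhaust)
        have i: "i \<in> I" and a': "a' \<in> lists I" using a(1) ai by auto
        have e: "wp a' \<otimes> s i = y" using a(3) ai a' i by (simp add: wp_append)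
        have "y \<otimes> s i = wp a'" unfolding e[symmetric] using a' i by (simp add: m_assoc)
        then have "wp a' = y \<otimes> s i" by simp
        then have "len (y \<otimes> s i) < len y" using len_le[OF a'] a(2) ai by simp
        show False
        proof (cases "i = k")
          case True
          then show False using nk \<open>len (y \<otimes> s i) < len y\<close> by simp
        next
          case False
          then have "i \<in> I - {k}" using i by simp
          then show False using F \<open>len (y \<otimes> s i) < len y\<close> by blast
        qed
      qed
      then have "ble w \<one>" using True by simp
      then have "w = \<one>" by (rule ble_one)
      then show ?thesis using w1 by simp
    qed
  qed
qed

end

theorem proposition3p13:
  fixes G :: "('a, 'b) monoid_scheme" and I :: "'i set" and s :: "'i \<Rightarrow> 'a"
    and w :: 'a and k :: 'i
  assumes "coxeter_system G I s"
    and "w \<in> carrier G" and "w \<noteq> \<one>\<^bsub>G\<^esub>"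
    and "k \<in> I" and "k \<notin> right_descent G I s w"
  shows "annex G I s (w \<otimes>\<^bsub>G\<^esub> s k)
           \<subseteq> annex G I s w <#>\<^bsub>G\<^esub> generate G (s ` (I - {k}))"
proof -
  obtain m where "group G" "s ` I \<subseteq> carrier G" "generate G (s ` I) = carrier G"
    "coxeter_matrix I m" "\<forall>ws \<in> lists I. word_prod G s ws = \<one>\<^bsub>G\<^esub> \<longleftrightarrow> cox_equiv I m ws []"
    using assms(1) unfolding coxeter_system_def by blast
  then interpret C: coxsys G I s m
    by (simp add: coxsys_def coxsys_axioms_def)
  show ?thesis
  proof
    fix y assume "y \<in> annex G I s (w \<otimes>\<^bsub>G\<^esub> s k)"
    then have "y \<in> carrier G" "\<not> bruhat_le G I s (w \<otimes>\<^bsub>G\<^esub> s k) y" unfolding annex_def by auto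
    then show "y \<in> annex G I s w <#>\<^bsub>G\<^esub> generate G (s ` (I - {k}))"
      using C.main[OF assms(2) assms(3) assms(4)] by blast
  qed
qed

end
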